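(* Let $A\subseteq B$ be an admissible extension (under the standing assumptions below). Then for every $\psi\in\mathrm{Spec}(A)$ there exists $\mu\in\mathrm{Min}(B)$ such that $\mu\cap\nabla_A\subseteq\psi$.
   Context: For an algebra $M$ of a fixed signature: $\mathrm{Con}(M)$ is its congruence lattice with bottom $\Delta_M$ and top $\nabla_M=M^2$. $[\cdot,\cdot]_M$ is the term condition commutator: for $\alpha,\beta,\mu\in\mathrm{Con}(M)$, $C(\alpha,\beta;\mu)$ means that for all $n,k$, every $(n+k)$-ary term $t$, all $(a_i,b_i)\in\alpha$ and $(c_j,d_j)\in\beta$: $(t(\bar a,\bar c),t(\bar a,\bar d))\in\mu$ iff $(t(\bar b,\bar c),t(\bar b,\bar d))\in\mu$; $[\alpha,\beta]_M=\bigcap\{\mu: C(\alpha,\beta;\mu)\}$. A congruence $\phi\neq\nabla_M$ is prime if $[\alpha,\beta]_M\subseteq\phi$ implies $\alpha\subseteq\phi$ or $\beta\subseteq\phi$; $\mathrm{Spec}(M)$ is the set of primes, $\mathrm{Min}(M)$ its minimal elements; $\rho_M(\theta)$ is the intersection of all primes containing $\theta$ ($\nabla_M$ if none); $M$ is semiprime if $\rho_M(\Delta_M)=\Delta_M$. Standing assumptions: $B$ is an algebra, $A$ is a subalgebra of $B$, $A$ and $B$ are semiprime, and the commutators of $A$ and $B$ are commutative and distributive w.r.t. arbitrary joins (i.e. $[\alpha,\beta]=[\beta,\alpha]$ and $[\bigvee_i\alpha_i,\beta]=\bigvee_i[\alpha_i,\beta]$). The extension $A\subseteq B$ is admissible iff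 $\phi\cap\nabla_A\in\mathrm{Spec}(A)$ for all $\phi\in\mathrm{Spec}(B)$. *)

theory Defs
  imports Main
begin

record ('f, 'a) ualg =
  ucarrier :: "'a set"
  uops :: "'f \<Rightarrow> 'a list \<Rightarrow> 'a"

definition is_alg :: "('f \<Rightarrow> nat) \<Rightarrow> ('f, 'a) ualg \<Rightarrow> bool" where
  "is_alg ar M \<longleftrightarrow> (\<forall>f xs. length xs = ar f \<and> set xs \<subseteq> ucarrier M
      \<longrightarrow> uops M f xs \<in> ucarrier M)"

definition is_subalg :: "('f \<Rightarrow> nat) \<Rightarrow> ('f, 'a) ualg \<Rightarrow> ('f, 'a) ualg \<Rightarrow> bool" where
  "is_subalg ar A B \<longleftrightarrow> is_alg ar A \<and> is_alg ar B \<and> ucarrier A \<subseteq> ucarrier B \<and>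
     (\<forall>f xs. length xs = ar f \<and> set xs \<subseteq> ucarrier A \<longrightarrow> uops A f xs = uops B f xs)"

datatype ('f, 'v) trm = V 'v | F 'f "('f, 'v) trm list"

primrec wf_trm :: "('f \<Rightarrow> nat) \<Rightarrow> ('f, 'v) trm \<Rightarrow> bool" where
  "wf_trm ar (V x) = True"
| "wf_trm ar (F f ts) = (length ts = ar f \<and> list_all (wf_trm ar) ts)"

primrec tvars :: "('f, 'v) trm \<Rightarrow> 'v set" where
  "tvars (V x) = {x}"
| "tvars (F f ts) = \<Union>(set (map tvars ts))"

primrec teval :: "('f, 'a) ualg \<Rightarrow> ('v \<Rightarrow> 'a) \<Rightarrow> ('f, 'v) trm \<Rightarrow> 'a" where
  "teval M env (V x) = env x"
| "teval M env (F f ts) = uops M f (map (teval M env) ts)"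

definition nabla :: "('f, 'a) ualg \<Rightarrow> 'a rel" where
  "nabla M = ucarrier M \<times> ucarrier M"

definition delta :: "('f, 'a) ualg \<Rightarrow> 'a rel" where
  "delta M = Id_on (ucarrier M)"

definition Con :: "('f \<Rightarrow> nat) \<Rightarrow> ('f, 'a) ualg \<Rightarrow> 'a rel set" where
  "Con ar M = {\<theta>. equiv (ucarrier M) \<theta> \<and>
     (\<forall>f xs ys. length xs = ar f \<and> length ys = ar f \<and>
        (\<forall>i<ar f. (xs ! i, ys ! i) \<in> \<theta>) \<longrightarrow> (uops M f xs, uops M f ys) \<in> \<theta>)}"

text \<open>Term condition C(alpha, beta; mu). Variables Inl i (i < n) stand for the
  tuple a / b, variables Inr j (j < k) for the tuple c / d.\<close>

definition TC :: "('f \<Rightarrow> nat) \<Rightarrow> ('f, 'a) ualg \<Rightarrow> 'a rel \<Rightarrow> 'a rel \<Rightarrow> 'a rel \<Rightarrow> bool" where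
  "TC ar M \<alpha> \<beta> \<mu> \<longleftrightarrow>
    (\<forall>(n::nat) (k::nat) (t::('f, nat + nat) trm) a b c d.
       wf_trm ar t \<and> tvars t \<subseteq> Inl ` {..<n} \<union> Inr ` {..<k} \<and>
       (\<forall>i<n. (a i, b i) \<in> \<alpha>) \<and> (\<forall>j<k. (c j, d j) \<in> \<beta>) \<longrightarrow>
       ((teval M (case_sum a c) t, teval M (case_sum a d) t) \<in> \<mu> \<longleftrightarrow>
        (teval M (case_sum b c) t, teval M (case_sum b d) t) \<in> \<mu>))"

definition comm :: "('f \<Rightarrow> nat) \<Rightarrow> ('f, 'a) ualg \<Rightarrow> 'a rel \<Rightarrow> 'a rel \<Rightarrow> 'a rel" where
  "comm ar M \<alpha> \<beta> = \<Inter>{\<mu> \<in> Con ar M. TC ar M \<alpha> \<beta> \<mu>}"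

definition cjoin :: "('f \<Rightarrow> nat) \<Rightarrow> ('f, 'a) ualg \<Rightarrow> 'a rel set \<Rightarrow> 'a rel" where
  "cjoin ar M S = \<Inter>{\<theta> \<in> Con ar M. \<Union>S \<subseteq> \<theta>}"

definition prime_con :: "('f \<Rightarrow> nat) \<Rightarrow> ('f, 'a) ualg \<Rightarrow> 'a rel \<Rightarrow> bool" where
  "prime_con ar M \<phi> \<longleftrightarrow> \<phi> \<in> Con ar M \<and> \<phi> \<noteq> nabla M \<and>
     (\<forall>\<alpha>\<in>Con ar M. \<forall>\<beta>\<in>Con ar M. comm ar M \<alpha> \<beta> \<subseteq> \<phi> \<longrightarrow> \<alpha> \<subseteq> \<phi> \<or> \<beta> \<subseteq> \<phi>)"

definition Spec :: "('f \<Rightarrow> nat) \<Rightarrow> ('f, 'a) ualg \<Rightarrow> 'a rel set" where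
  "Spec ar M = {\<phi>. prime_con ar M \<phi>}"

definition MinSpec :: "('f \<Rightarrow> nat) \<Rightarrow> ('f, 'a) ualg \<Rightarrow> 'a rel set" where
  "MinSpec ar M = {\<phi> \<in> Spec ar M. \<forall>\<psi>\<in>Spec ar M. \<psi> \<subseteq> \<phi> \<longrightarrow> \<psi> = \<phi>}"

text \<open>rho(theta): intersection of the primes containing theta; nabla if there are none.\<close>
definition rho :: "('f \<Rightarrow> nat) \<Rightarrow> ('f, 'a) ualg \<Rightarrow> 'a rel \<Rightarrow> 'a rel" where
  "rho ar M \<theta> = nabla M \<inter> \<Inter>{\<phi> \<in> Spec ar M. \<theta> \<subseteq> \<phi>}"

definition semiprime :: "('f \<Rightarrow> nat) \<Rightarrow> ('f, 'a) ualg \<Rightarrow> bool" where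
  "semiprime ar M \<longleftrightarrow> rho ar M (delta M) = delta M"

definition comm_commutative :: "('f \<Rightarrow> nat) \<Rightarrow> ('f, 'a) ualg \<Rightarrow> bool" where
  "comm_commutative ar M \<longleftrightarrow>
     (\<forall>\<alpha>\<in>Con ar M. \<forall>\<beta>\<in>Con ar M. comm ar M \<alpha> \<beta> = comm ar M \<beta> \<alpha>)"

definition comm_join_distributive :: "('f \<Rightarrow> nat) \<Rightarrow> ('f, 'a) ualg \<Rightarrow> bool" where
  "comm_join_distributive ar M \<longleftrightarrow>
     (\<forall>S \<subseteq> Con ar M. \<forall>\<beta>\<in>Con ar M.
        comm ar M (cjoin ar M S) \<beta> = cjoin ar M ((\<lambda>\<alpha>. comm ar M \<alpha> \<beta>) ` S))"

definition admissible :: "('f \<Rightarrow> nat) \<Rightarrow> ('f, 'a) ualg \<Rightarrow> ('f, 'a) ualg \<Rightarrow> bool" where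
  "admissible ar A B \<longleftrightarrow> (\<forall>\<phi>\<in>Spec ar B. \<phi> \<inter> nabla A \<in> Spec ar A)"

end

theory Submission
  imports Defs
begin

lemma teval_cong:
  "(\<forall>v\<in>tvars t. e1 v = e2 v) \<Longrightarrow> teval M e1 t = teval M e2 t"
proof (induction t)
  case (V x) then show ?case by simp
next
  case (F f ts)
  then have "map (teval M e1) ts = map (teval M e2) ts" by (auto simp: map_eq_conv)
  then show ?case by (metis teval.simps(2))
qed

lemma teval_closed:
  assumes "is_alg ar M"
  shows "wf_trm ar t \<Longrightarrow> (\<forall>v\<in>tvars t. e v \<in> ucarrier M) \<Longrightarrow> teval M e t \<in> ucarrier M"
proof (induction t)
  case (V x) then show ?case by simp
next
  case (F f ts)
  then have "set (map (teval M e) ts) \<subseteq> ucarrier M"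
    by (auto simp: list_all_iff)
  moreover have "length (map (teval M e) ts) = ar f" using F.prems by simp
  ultimately show ?case using assms unfolding is_alg_def by simp
qed

lemma teval_sub:
  assumes "is_subalg ar A B"
  shows "wf_trm ar t \<Longrightarrow> (\<forall>v\<in>tvars t. e v \<in> ucarrier A) \<Longrightarrow> teval A e t = teval B e t"
proof (induction t)
  case (V x) then show ?case by simp
next
  case (F f ts)
  then have eq: "map (teval A e) ts = map (teval B e) ts"
    by (auto simp: list_all_iff)
  have "is_alg ar A" using assms unfolding is_subalg_def by simp
  then have "set (map (teval A e) ts) \<subseteq> ucarrier A"
    using F.prems by (auto simp: list_all_iff intro!: teval_closed[OF \<open>is_alg ar A\<close>])
  moreover have "length (map (teval A e) ts) = ar f" using F.prems by simp
  ultimately have "uops A f (map (teval A e) ts) = uops B f (map (teval A e) ts)"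
    using assms unfolding is_subalg_def by blast
  then show ?case using eq by (metis teval.simps(2))
qed

lemma teval_compat:
  assumes "\<theta> \<in> Con ar M"
  shows "wf_trm ar t \<Longrightarrow> (\<forall>v\<in>tvars t. (e1 v, e2 v) \<in> \<theta>) \<Longrightarrow> (teval M e1 t, teval M e2 t) \<in> \<theta>"
proof (induction t)
  case (V x) then show ?case by simp
next
  case (F f ts)
  let ?xs = "map (teval M e1) ts" and ?ys = "map (teval M e2) ts"
  have "\<forall>i<ar f. (?xs ! i, ?ys ! i) \<in> \<theta>"
  proof (intro allI impI)
    fix i assume "i < ar f"
    then have i: "i < length ts" using F.prems by simp
    then have "ts ! i \<in> set ts" by simp
    then show "(?xs ! i, ?ys ! i) \<in> \<theta>" using F i by (auto simp: list_all_iff)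
  qed
  moreover have "length ?xs = ar f" "length ?ys = ar f" using F.prems by auto
  ultimately show ?case using assms unfolding Con_def by simp
qed

lemma Con_compat:
  "\<theta> \<in> Con ar M \<Longrightarrow> length xs = ar f \<Longrightarrow> length ys = ar f \<Longrightarrow>
   (\<And>i. i < ar f \<Longrightarrow> (xs ! i, ys ! i) \<in> \<theta>) \<Longrightarrow> (uops M f xs, uops M f ys) \<in> \<theta>"
  unfolding Con_def by blast

lemma Con_equiv: "\<theta> \<in> Con ar M \<Longrightarrow> equiv (ucarrier M) \<theta>"
  unfolding Con_def by blast

lemma Con_sub_nabla: "\<theta> \<in> Con ar M \<Longrightarrow> \<theta> \<subseteq> nabla M"
  unfolding Con_def nabla_def equiv_def by blast

lemma nabla_Con:
  assumes "is_alg ar M" shows "nabla M \<in> Con ar M"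
proof -
  have "equiv (ucarrier M) (nabla M)" unfolding nabla_def equiv_def refl_on_def sym_def trans_def by blast
  moreover have "(uops M f xs, uops M f ys) \<in> nabla M"
    if "length xs = ar f" "length ys = ar f" "\<forall>i<ar f. (xs ! i, ys ! i) \<in> nabla M" for f xs ys
  proof -
    have "set xs \<subseteq> ucarrier M" "set ys \<subseteq> ucarrier M"
      using that by (auto simp: nabla_def in_set_conv_nth)
    then show ?thesis using assms that unfolding is_alg_def nabla_def by auto
  qed
  ultimately show ?thesis unfolding Con_def by blast
qed

lemma delta_Con:
  assumes "is_alg ar M" shows "delta M \<in> Con ar M"
proof -
  have "equiv (ucarrier M) (delta M)" unfolding delta_def equiv_def refl_on_def sym_def trans_def by auto
  moreover have "(uops M f xs, uops M f ys) \<in> delta M"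
    if "length xs = ar f" "length ys = ar f" "\<forall>i<ar f. (xs ! i, ys ! i) \<in> delta M" for f xs ys
  proof -
    have "xs = ys" using that by (intro nth_equalityI) (auto simp: delta_def)
    moreover have "set xs \<subseteq> ucarrier M"
      using that by (auto simp: delta_def in_set_conv_nth)
    ultimately show ?thesis using assms that unfolding is_alg_def delta_def by auto
  qed
  ultimately show ?thesis unfolding Con_def by blast
qed

lemma Inter_Con:
  assumes "S \<noteq> {}" "S \<subseteq> Con ar M" shows "\<Inter>S \<in> Con ar M"
proof -
  have "equiv (ucarrier M) (\<Inter>S)"
    using assms unfolding Con_def equiv_def refl_on_def sym_def trans_def by blast
  moreover have "(uops M f xs, uops M f ys) \<in> \<Inter>S"
    if "length xs = ar f" "length ys = ar f" "\<forall>i<ar f. (xs ! i, ys ! i) \<in> \<Inter>S" for f xs ys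
    using that assms unfolding Con_def by blast
  ultimately show ?thesis unfolding Con_def by blast
qed

lemma cjoin_Con:
  assumes "is_alg ar M" "S \<subseteq> Con ar M" shows "cjoin ar M S \<in> Con ar M"
proof -
  have "nabla M \<in> {\<theta> \<in> Con ar M. \<Union>S \<subseteq> \<theta>}"
    using assms nabla_Con Con_sub_nabla by blast
  then show ?thesis unfolding cjoin_def by (intro Inter_Con) auto
qed

lemma cjoin_upper: "\<alpha> \<in> S \<Longrightarrow> \<alpha> \<subseteq> cjoin ar M S"
  unfolding cjoin_def by blast

lemma cjoin_least: "\<theta> \<in> Con ar M \<Longrightarrow> \<Union>S \<subseteq> \<theta> \<Longrightarrow> cjoin ar M S \<subseteq> \<theta>"
  unfolding cjoin_def by blast

lemma Union_chain_Con:
  assumes "C \<noteq> {}" "subset.chain (Con ar M) C" shows "\<Union>C \<in> Con ar M"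
proof -
  have CC: "C \<subseteq> Con ar M" and tot: "\<And>X Y. X \<in> C \<Longrightarrow> Y \<in> C \<Longrightarrow> X \<subseteq> Y \<or> Y \<subseteq> X"
    using assms(2) unfolding subset_chain_def by auto
  have eq: "\<And>X. X \<in> C \<Longrightarrow> equiv (ucarrier M) X" using CC Con_equiv by blast
  have "equiv (ucarrier M) (\<Union>C)"
  proof (rule equivI)
    show "\<Union>C \<subseteq> ucarrier M \<times> ucarrier M" using eq equiv_type by blast
    show "refl_on (ucarrier M) (\<Union>C)" using eq assms(1) unfolding equiv_def refl_on_def by blast
    show "sym (\<Union>C)" using eq unfolding equiv_def sym_def by blast
    show "trans (\<Union>C)"
    proof (rule transI)
      fix x y z assume "(x, y) \<in> \<Union>C" "(y, z) \<in> \<Union>C"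
      then obtain X Y where X: "X \<in> C" "(x,y) \<in> X" and Y: "Y \<in> C" "(y,z) \<in> Y" by blast
      show "(x, z) \<in> \<Union>C"
      proof (cases "X \<subseteq> Y")
        case True
        then have "(x,z) \<in> Y" using X Y eq[OF Y(1)] unfolding equiv_def trans_def by blast
        then show ?thesis using Y by blast
      next
        case False
        then have "Y \<subseteq> X" using tot X Y by blast
        then have "(x,z) \<in> X" using X Y eq[OF X(1)] unfolding equiv_def trans_def by blast
        then show ?thesis using X by blast
      qed
    qed
  qed
  moreover have "(uops M f xs, uops M f ys) \<in> \<Union>C"
    if "length xs = ar f" "length ys = ar f" "\<forall>i<ar f. (xs ! i, ys ! i) \<in> \<Union>C" for f xs ys
  proof -
    have "finite ((\<lambda>i. (xs ! i, ys ! i)) ` {..<ar f})" by simp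
    moreover have "(\<lambda>i. (xs ! i, ys ! i)) ` {..<ar f} \<subseteq> \<Union>C" using that by auto
    ultimately obtain X where X: "X \<in> C" "(\<lambda>i. (xs ! i, ys ! i)) ` {..<ar f} \<subseteq> X"
      using finite_subset_Union_chain[OF _ _ assms(1) assms(2)] by metis
    then have "(uops M f xs, uops M f ys) \<in> X"
      using that X(1) CC by (intro Con_compat[of X]) auto
    then show ?thesis using X by blast
  qed
  ultimately show ?thesis unfolding Con_def by blast
qed

lemma restrict_Con:
  assumes "is_subalg ar A B" "\<mu> \<in> Con ar B" shows "\<mu> \<inter> nabla A \<in> Con ar A"
proof -
  have sub: "ucarrier A \<subseteq> ucarrier B" and alg: "is_alg ar A" using assms unfolding is_subalg_def by auto
  have e: "equiv (ucarrier B) \<mu>" using assms Con_equiv by blast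
  have "equiv (ucarrier A) (\<mu> \<inter> nabla A)"
    using e sub unfolding equiv_def refl_on_def sym_def trans_def nabla_def by blast
  moreover have "(uops A f xs, uops A f ys) \<in> \<mu> \<inter> nabla A"
    if "length xs = ar f" "length ys = ar f" "\<forall>i<ar f. (xs ! i, ys ! i) \<in> \<mu> \<inter> nabla A" for f xs ys
  proof -
    have s: "set xs \<subseteq> ucarrier A" "set ys \<subseteq> ucarrier A"
      using that by (auto simp: nabla_def in_set_conv_nth)
    then have "uops A f xs = uops B f xs" "uops A f ys = uops B f ys"
      using assms(1) that unfolding is_subalg_def by auto
    moreover have "(uops B f xs, uops B f ys) \<in> \<mu>" using assms(2) that by (intro Con_compat[of \<mu>]) auto
    moreover have "uops A f xs \<in> ucarrier A" "uops A f ys \<in> ucarrier A"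
      using alg s that unfolding is_alg_def by auto
    ultimately show ?thesis unfolding nabla_def by auto
  qed
  ultimately show ?thesis unfolding Con_def by blast
qed

lemma TC_right:
  fixes ar :: "'f \<Rightarrow> nat" and M :: "('f, 'a) ualg"
  assumes "\<gamma> \<in> Con ar M" "\<delta> \<in> Con ar M" shows "TC ar M \<gamma> \<delta> \<delta>"
  unfolding TC_def
proof (intro allI impI)
  fix n k :: nat and t :: "('f, nat + nat) trm" and a b c d
  assume h: "wf_trm ar t \<and> tvars t \<subseteq> Inl ` {..<n} \<union> Inr ` {..<k} \<and>
       (\<forall>i<n. (a i, b i) \<in> \<gamma>) \<and> (\<forall>j<k. (c j, d j) \<in> \<delta>)"
  have eg: "equiv (ucarrier M) \<gamma>" and ed: "equiv (ucarrier M) \<delta>" using assms Con_equiv by blast+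
  have ca: "a i \<in> ucarrier M" "b i \<in> ucarrier M" if "i < n" for i
    using h that equiv_type[OF eg] by blast+
  have env: "\<forall>v\<in>tvars t. (case_sum x c v, case_sum x d v) \<in> \<delta>"
    if "\<And>i. i < n \<Longrightarrow> x i \<in> ucarrier M" for x
  proof
    fix v assume "v \<in> tvars t"
    then have "v \<in> Inl ` {..<n} \<union> Inr ` {..<k}" using h by blast
    then show "(case_sum x c v, case_sum x d v) \<in> \<delta>"
      using that h ed unfolding equiv_def refl_on_def by auto
  qed
  have "(teval M (case_sum a c) t, teval M (case_sum a d) t) \<in> \<delta>"
    using h by (intro teval_compat[OF assms(2)] env ca) auto
  moreover have "(teval M (case_sum b c) t, teval M (case_sum b d) t) \<in> \<delta>"
    using h by (intro teval_compat[OF assms(2)] env ca) auto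
  ultimately show "((teval M (case_sum a c) t, teval M (case_sum a d) t) \<in> \<delta>) =
         ((teval M (case_sum b c) t, teval M (case_sum b d) t) \<in> \<delta>)" by blast
qed

lemma comm_sub_right:
  assumes "\<gamma> \<in> Con ar M" "\<delta> \<in> Con ar M" shows "comm ar M \<gamma> \<delta> \<subseteq> \<delta>"
  using TC_right[OF assms] assms(2) unfolding comm_def by blast

lemma comm_sub_left:
  assumes "comm_commutative ar M" "\<gamma> \<in> Con ar M" "\<delta> \<in> Con ar M" shows "comm ar M \<gamma> \<delta> \<subseteq> \<gamma>"
  using comm_sub_right[OF assms(3,2)] assms unfolding comm_commutative_def by metis

lemma TC_restrict:
  fixes ar :: "'f \<Rightarrow> nat" and A B :: "('f, 'a) ualg"
  assumes sub: "is_subalg ar A B" and tcB: "TC ar B \<alpha> \<beta> \<mu>"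
  shows "TC ar A (\<alpha> \<inter> nabla A) (\<beta> \<inter> nabla A) (\<mu> \<inter> nabla A)"
  unfolding TC_def
proof (intro allI impI)
  fix n k :: nat and t :: "('f, nat + nat) trm" and a b c d
  assume h: "wf_trm ar t \<and> tvars t \<subseteq> Inl ` {..<n} \<union> Inr ` {..<k} \<and>
       (\<forall>i<n. (a i, b i) \<in> \<alpha> \<inter> nabla A) \<and> (\<forall>j<k. (c j, d j) \<in> \<beta> \<inter> nabla A)"
  have alg: "is_alg ar A" using sub unfolding is_subalg_def by simp
  have wf: "wf_trm ar t" and tv: "tvars t \<subseteq> Inl ` {..<n} \<union> Inr ` {..<k}" using h by auto
  have h2: "wf_trm ar t \<and> tvars t \<subseteq> Inl ` {..<n} \<union> Inr ` {..<k} \<and>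
       (\<forall>i<n. (a i, b i) \<in> \<alpha>) \<and> (\<forall>j<k. (c j, d j) \<in> \<beta>)" using h by auto
  have iff: "((teval B (case_sum a c) t, teval B (case_sum a d) t) \<in> \<mu>) =
        ((teval B (case_sum b c) t, teval B (case_sum b d) t) \<in> \<mu>)"
    using tcB h2 unfolding TC_def by blast
  have car: "\<forall>v\<in>tvars t. case_sum x y v \<in> ucarrier A"
    if "\<And>i. i < n \<Longrightarrow> x i \<in> ucarrier A" "\<And>j. j < k \<Longrightarrow> y j \<in> ucarrier A" for x y
  proof
    fix v assume "v \<in> tvars t"
    then have "v \<in> Inl ` {..<n} \<union> Inr ` {..<k}" using tv by blast
    then show "case_sum x y v \<in> ucarrier A" using that by auto
  qed
  have ca: "a i \<in> ucarrier A" "b i \<in> ucarrier A" if "i < n" for i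
    using h that unfolding nabla_def by blast+
  have cc: "c j \<in> ucarrier A" "d j \<in> ucarrier A" if "j < k" for j
    using h that unfolding nabla_def by blast+
  have e1: "teval A (case_sum x y) t = teval B (case_sum x y) t" "teval A (case_sum x y) t \<in> ucarrier A"
    if "\<And>i. i < n \<Longrightarrow> x i \<in> ucarrier A" "\<And>j. j < k \<Longrightarrow> y j \<in> ucarrier A" for x y
    using teval_sub[OF sub wf car[OF that]] teval_closed[OF alg wf car[OF that]] by auto
  show "((teval A (case_sum a c) t, teval A (case_sum a d) t) \<in> \<mu> \<inter> nabla A) =
         ((teval A (case_sum b c) t, teval A (case_sum b d) t) \<in> \<mu> \<inter> nabla A)"
    using iff e1[of a c] e1[of a d] e1[of b c] e1[of b d] ca cc unfolding nabla_def by auto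
qed

lemma comm_restrict:
  fixes ar :: "'f \<Rightarrow> nat" and A B :: "('f, 'a) ualg"
  assumes sub: "is_subalg ar A B"
  shows "comm ar A (\<alpha> \<inter> nabla A) (\<beta> \<inter> nabla A) \<subseteq> comm ar B \<alpha> \<beta>"
proof
  fix x assume x: "x \<in> comm ar A (\<alpha> \<inter> nabla A) (\<beta> \<inter> nabla A)"
  show "x \<in> comm ar B \<alpha> \<beta>" unfolding comm_def
  proof
    fix \<mu> assume "\<mu> \<in> {\<mu> \<in> Con ar B. TC ar B \<alpha> \<beta> \<mu>}"
    then have "\<mu> \<inter> nabla A \<in> {\<mu> \<in> Con ar A. TC ar A (\<alpha> \<inter> nabla A) (\<beta> \<inter> nabla A) \<mu>}"
      using restrict_Con[OF sub] TC_restrict[OF sub] by blast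
    then show "x \<in> \<mu>" using x unfolding comm_def by blast
  qed
qed

lemma Inter_chain_prime:
  assumes ne: "D \<noteq> {}" and DS: "D \<subseteq> Spec ar M"
    and tot: "\<And>X Y. X \<in> D \<Longrightarrow> Y \<in> D \<Longrightarrow> X \<subseteq> Y \<or> Y \<subseteq> X"
  shows "\<Inter>D \<in> Spec ar M"
proof -
  have pc: "\<And>d. d \<in> D \<Longrightarrow> prime_con ar M d" using DS unfolding Spec_def by blast
  have con: "\<And>d. d \<in> D \<Longrightarrow> d \<in> Con ar M" using pc unfolding prime_con_def by blast
  have IC: "\<Inter>D \<in> Con ar M" using ne con by (intro Inter_Con) auto
  obtain d0 where d0: "d0 \<in> D" using ne by blast
  have "\<Inter>D \<noteq> nabla M"
  proof
    assume eq: "\<Inter>D = nabla M"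
    have "d0 \<subseteq> nabla M" using Con_sub_nabla con d0 by blast
    moreover have "nabla M \<subseteq> d0" using eq d0 by blast
    ultimately show False using pc[OF d0] unfolding prime_con_def by blast
  qed
  moreover have "\<alpha> \<subseteq> \<Inter>D \<or> \<beta> \<subseteq> \<Inter>D"
    if ab: "\<alpha> \<in> Con ar M" "\<beta> \<in> Con ar M" and c: "comm ar M \<alpha> \<beta> \<subseteq> \<Inter>D" for \<alpha> \<beta>
  proof (rule ccontr)
    assume "\<not> (\<alpha> \<subseteq> \<Inter>D \<or> \<beta> \<subseteq> \<Inter>D)"
    then obtain d1 d2 where d1: "d1 \<in> D" "\<not> \<alpha> \<subseteq> d1" and d2: "d2 \<in> D" "\<not> \<beta> \<subseteq> d2" by blast
    obtain d where d: "d \<in> D" "\<not> \<alpha> \<subseteq> d" "\<not> \<beta> \<subseteq> d"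
    proof (cases "d1 \<subseteq> d2")
      case True then show ?thesis using that d1 d2 by blast
    next
      case False then have "d2 \<subseteq> d1" using tot d1 d2 by blast
      then show ?thesis using that d1 d2 by blast
    qed
    have "comm ar M \<alpha> \<beta> \<subseteq> d" using c d by blast
    then show False using pc[OF d(1)] ab d unfolding prime_con_def by blast
  qed
  ultimately show ?thesis using IC unfolding Spec_def prime_con_def by blast
qed

lemma exists_min_below:
  assumes "\<phi> \<in> Spec ar M"
  shows "\<exists>\<mu>\<in>MinSpec ar M. \<mu> \<subseteq> \<phi>"
proof -
  define P where "P = {\<mu> \<in> Spec ar M. \<mu> \<subseteq> \<phi>}"
  have "\<exists>X\<in>uminus ` P. \<forall>Y\<in>uminus ` P. X \<subseteq> Y \<longrightarrow> Y = X"
  proof (rule subset_Zorn_nonempty)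
    show "uminus ` P \<noteq> {}" using assms unfolding P_def by blast
    fix C assume ne: "C \<noteq> {}" and ch: "subset.chain (uminus ` P) C"
    define D where "D = uminus ` C"
    have CD: "C = uminus ` D" unfolding D_def by (simp add: image_image)
    have DP: "D \<subseteq> P" using ch unfolding D_def subset_chain_def by auto
    have tot: "X \<subseteq> Y \<or> Y \<subseteq> X" if XY: "X \<in> D" "Y \<in> D" for X Y
    proof -
      obtain X' Y' where "X' \<in> C" "Y' \<in> C" "X = - X'" "Y = - Y'" using XY unfolding D_def by blast
      moreover have "X' \<subseteq> Y' \<or> Y' \<subseteq> X'" using ch \<open>X' \<in> C\<close> \<open>Y' \<in> C\<close> unfolding subset_chain_def by blast
      ultimately show ?thesis by blast
    qed
    have "\<Inter>D \<in> Spec ar M" using ne DP tot unfolding D_def P_def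
      by (intro Inter_chain_prime) auto
    moreover have "\<Inter>D \<subseteq> \<phi>" using ne DP unfolding D_def P_def by blast
    ultimately have "\<Inter>D \<in> P" unfolding P_def by blast
    moreover have "\<Union>C = - \<Inter>D" unfolding CD by auto
    ultimately show "\<Union>C \<in> uminus ` P" by blast
  qed
  then obtain \<mu> where mu: "\<mu> \<in> P" and mx: "\<forall>Y\<in>uminus ` P. - \<mu> \<subseteq> Y \<longrightarrow> Y = - \<mu>" by blast
  have "\<mu> \<in> MinSpec ar M" unfolding MinSpec_def
  proof (intro CollectI conjI ballI impI)
    show "\<mu> \<in> Spec ar M" using mu unfolding P_def by blast
    fix \<psi> assume "\<psi> \<in> Spec ar M" "\<psi> \<subseteq> \<mu>"
    then have "\<psi> \<in> P" using mu unfolding P_def by blast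
    moreover have "- \<mu> \<subseteq> - \<psi>" using \<open>\<psi> \<subseteq> \<mu>\<close> by blast
    ultimately have "- \<psi> = - \<mu>" using mx by blast
    then show "\<psi> = \<mu>" by simp
  qed
  then show ?thesis using mu unfolding P_def by blast
qed

lemma exists_prime_above:
  fixes ar :: "'f \<Rightarrow> nat" and A B :: "('f, 'a) ualg"
  assumes sub: "is_subalg ar A B"
    and cc: "comm_commutative ar B" and jd: "comm_join_distributive ar B"
    and psi: "\<psi> \<in> Spec ar A"
  shows "\<exists>\<phi>\<in>Spec ar B. \<phi> \<inter> nabla A \<subseteq> \<psi>"
proof -
  have algA: "is_alg ar A" and algB: "is_alg ar B" and AB: "ucarrier A \<subseteq> ucarrier B"
    using sub unfolding is_subalg_def by auto
  have pA: "prime_con ar A \<psi>" using psi unfolding Spec_def by blast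
  have psiC: "\<psi> \<in> Con ar A" and psin: "\<psi> \<noteq> nabla A"
    and psip: "\<And>\<alpha> \<beta>. \<alpha> \<in> Con ar A \<Longrightarrow> \<beta> \<in> Con ar A \<Longrightarrow> comm ar A \<alpha> \<beta> \<subseteq> \<psi> \<Longrightarrow> \<alpha> \<subseteq> \<psi> \<or> \<beta> \<subseteq> \<psi>"
    using pA unfolding prime_con_def by blast+
  have nsub: "\<not> nabla A \<subseteq> \<psi>" using psin Con_sub_nabla[OF psiC] by blast
  have jdB: "\<And>S \<beta>. S \<subseteq> Con ar B \<Longrightarrow> \<beta> \<in> Con ar B \<Longrightarrow>
      comm ar B (cjoin ar B S) \<beta> = cjoin ar B ((\<lambda>\<alpha>. comm ar B \<alpha> \<beta>) ` S)"
    using jd unfolding comm_join_distributive_def by blast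
  have ccB: "\<And>x y. x \<in> Con ar B \<Longrightarrow> y \<in> Con ar B \<Longrightarrow> comm ar B x y = comm ar B y x"
    using cc unfolding comm_commutative_def by blast
  define F where "F = {\<theta> \<in> Con ar B. \<theta> \<inter> nabla A \<subseteq> \<psi>}"
  have "\<exists>M\<in>F. \<forall>X\<in>F. M \<subseteq> X \<longrightarrow> X = M"
  proof (rule subset_Zorn_nonempty)
    have "delta B \<inter> nabla A \<subseteq> \<psi>"
      using Con_equiv[OF psiC] unfolding delta_def nabla_def equiv_def refl_on_def by auto
    then show "F \<noteq> {}" using delta_Con[OF algB] unfolding F_def by blast
    fix C assume ne: "C \<noteq> {}" and ch: "subset.chain F C"
    have "subset.chain (Con ar B) C" using ch unfolding subset_chain_def F_def by blast
    then have "\<Union>C \<in> Con ar B" using ne Union_chain_Con by blast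
    moreover have "\<Union>C \<inter> nabla A \<subseteq> \<psi>" using ch unfolding subset_chain_def F_def by blast
    ultimately show "\<Union>C \<in> F" unfolding F_def by blast
  qed
  then obtain \<theta> where thF: "\<theta> \<in> F" and mx: "\<And>X. X \<in> F \<Longrightarrow> \<theta> \<subseteq> X \<Longrightarrow> X = \<theta>" by blast
  have thC: "\<theta> \<in> Con ar B" and thA: "\<theta> \<inter> nabla A \<subseteq> \<psi>" using thF unfolding F_def by auto
  have "\<theta> \<noteq> nabla B"
  proof
    assume "\<theta> = nabla B"
    then have "nabla A \<subseteq> \<theta> \<inter> nabla A" using AB unfolding nabla_def by auto
    then show False using thA nsub by blast
  qed
  moreover have "\<alpha> \<subseteq> \<theta> \<or> \<beta> \<subseteq> \<theta>"
    if aC: "\<alpha> \<in> Con ar B" and bC: "\<beta> \<in> Con ar B" and c: "comm ar B \<alpha> \<beta> \<subseteq> \<theta>" for \<alpha> \<beta>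
  proof (rule ccontr)
    assume nn: "\<not> (\<alpha> \<subseteq> \<theta> \<or> \<beta> \<subseteq> \<theta>)"
    define Ja where "Ja = cjoin ar B {\<alpha>, \<theta>}"
    define Jb where "Jb = cjoin ar B {\<beta>, \<theta>}"
    have JaC: "Ja \<in> Con ar B" unfolding Ja_def using aC thC by (intro cjoin_Con[OF algB]) auto
    have JbC: "Jb \<in> Con ar B" unfolding Jb_def using bC thC by (intro cjoin_Con[OF algB]) auto
    have "\<alpha> \<subseteq> Ja" "\<theta> \<subseteq> Ja" unfolding Ja_def by (rule cjoin_upper, simp)+
    then have "Ja \<noteq> \<theta>" using nn by blast
    then have "Ja \<notin> F" using mx[of Ja] \<open>\<theta> \<subseteq> Ja\<close> by blast
    then have "\<not> Ja \<inter> nabla A \<subseteq> \<psi>" using JaC unfolding F_def by simp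
    have "\<beta> \<subseteq> Jb" "\<theta> \<subseteq> Jb" unfolding Jb_def by (rule cjoin_upper, simp)+
    then have "Jb \<noteq> \<theta>" using nn by blast
    then have "Jb \<notin> F" using mx[of Jb] \<open>\<theta> \<subseteq> Jb\<close> by blast
    then have "\<not> Jb \<inter> nabla A \<subseteq> \<psi>" using JbC unfolding F_def by simp
    have c1: "comm ar B \<theta> Jb \<subseteq> \<theta>" using comm_sub_left[OF cc thC JbC] .
    have c2: "comm ar B \<theta> \<alpha> \<subseteq> \<theta>" using comm_sub_left[OF cc thC aC] .
    have c3: "comm ar B \<beta> \<alpha> \<subseteq> \<theta>" using c ccB[OF aC bC] by simp
    have "comm ar B Jb \<alpha> = cjoin ar B ((\<lambda>\<gamma>. comm ar B \<gamma> \<alpha>) ` {\<beta>, \<theta>})"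
      unfolding Jb_def using bC thC aC by (intro jdB) auto
    also have "\<dots> \<subseteq> \<theta>" using c2 c3 by (intro cjoin_least[OF thC]) auto
    finally have c4: "comm ar B \<alpha> Jb \<subseteq> \<theta>" using ccB[OF aC JbC] by simp
    have "comm ar B Ja Jb = cjoin ar B ((\<lambda>\<gamma>. comm ar B \<gamma> Jb) ` {\<alpha>, \<theta>})"
      unfolding Ja_def using JbC thC aC by (intro jdB) auto
    also have "\<dots> \<subseteq> \<theta>" using c1 c4 by (intro cjoin_least[OF thC]) auto
    finally have cJ: "comm ar B Ja Jb \<subseteq> \<theta>" .
    have raC: "Ja \<inter> nabla A \<in> Con ar A" using restrict_Con[OF sub JaC] .
    have rbC: "Jb \<inter> nabla A \<in> Con ar A" using restrict_Con[OF sub JbC] .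
    have "comm ar A (Ja \<inter> nabla A) (Jb \<inter> nabla A) \<subseteq> nabla A"
      using comm_sub_right[OF raC rbC] Con_sub_nabla[OF rbC] by blast
    moreover have "comm ar A (Ja \<inter> nabla A) (Jb \<inter> nabla A) \<subseteq> \<theta>"
      using comm_restrict[OF sub, of Ja Jb] cJ by blast
    ultimately have "comm ar A (Ja \<inter> nabla A) (Jb \<inter> nabla A) \<subseteq> \<psi>" using thA by blast
    then have "Ja \<inter> nabla A \<subseteq> \<psi> \<or> Jb \<inter> nabla A \<subseteq> \<psi>" using psip raC rbC by blast
    then show False using \<open>\<not> Ja \<inter> nabla A \<subseteq> \<psi>\<close> \<open>\<not> Jb \<inter> nabla A \<subseteq> \<psi>\<close> by blast
  qed
  ultimately have "\<theta> \<in> Spec ar B" using thC unfolding Spec_def prime_con_def by blast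
  then show ?thesis using thA by blast
qed

theorem mainTheorem13:
  fixes ar :: "'f \<Rightarrow> nat" and A B :: "('f, 'a) ualg"
  assumes "is_subalg ar A B"
    and "semiprime ar A" and "semiprime ar B"
    and "comm_commutative ar A" and "comm_commutative ar B"
    and "comm_join_distributive ar A" and "comm_join_distributive ar B"
    and "admissible ar A B"
  shows "\<forall>\<psi>\<in>Spec ar A. \<exists>\<mu>\<in>MinSpec ar B. \<mu> \<inter> nabla A \<subseteq> \<psi>"
proof
  fix \<psi> assume "\<psi> \<in> Spec ar A"
  then obtain \<phi> where "\<phi> \<in> Spec ar B" "\<phi> \<inter> nabla A \<subseteq> \<psi>"
    using exists_prime_above[OF assms(1,5,7)] by blast
  moreover obtain \<mu> where "\<mu> \<in> MinSpec ar B" "\<mu> \<subseteq> \<phi>"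
    using exists_min_below[OF \<open>\<phi> \<in> Spec ar B\<close>] by blast
  ultimately show "\<exists>\<mu>\<in>MinSpec ar B. \<mu> \<inter> nabla A \<subseteq> \<psi>" by blast
qed

end
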